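(* Let $R$ be an integral domain, $n$ a positive integer, and $I$ an ideal of $R$. Then $\langle I,X\rangle$ is a weakly $n$-absorbing ideal of the polynomial ring $R[X]$ if and only if $I$ is a weakly $n$-absorbing ideal of $R$.
   Context: All rings are commutative with $1\neq0$. A proper ideal $I$ of a ring $R$ is weakly $n$-absorbing if whenever $0\neq a_1\cdots a_{n+1}\in I$ with $a_1,\dots,a_{n+1}\in R$, there are $n$ of the $a_i$'s whose product is in $I$. $\langle I,X\rangle$ denotes the ideal of $R[X]$ generated by $I$ and $X$. *)

theory Defs
  imports "HOL-Computational_Algebra.Polynomial"
begin

definition is_ideal :: "'a::comm_ring_1 set \<Rightarrow> bool" where
  "is_ideal I \<longleftrightarrow> 0 \<in> I \<and> (\<forall>x\<in>I. \<forall>y\<in>I. x + y \<in> I) \<and> (\<forall>r x. x \<in> I \<longrightarrow> r * x \<in> I)"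

definition ideal_gen :: "'a::comm_ring_1 set \<Rightarrow> 'a set" where
  "ideal_gen S = \<Inter>{J. is_ideal J \<and> S \<subseteq> J}"

definition weakly_n_absorbing :: "nat \<Rightarrow> 'a::comm_ring_1 set \<Rightarrow> bool" where
  "weakly_n_absorbing n I \<longleftrightarrow> is_ideal I \<and> I \<noteq> UNIV \<and>
     (\<forall>a :: nat \<Rightarrow> 'a. (\<Prod>i\<le>n. a i) \<noteq> 0 \<longrightarrow> (\<Prod>i\<le>n. a i) \<in> I \<longrightarrow>
        (\<exists>j\<le>n. (\<Prod>i\<in>{..n} - {j}. a i) \<in> I))"

end

theory Submission
  imports Defs
begin

lemma coeff0_prod: "coeff (\<Prod>k\<in>A. p k) 0 = (\<Prod>k\<in>A. coeff (p k) 0)"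
  by (simp only: poly_0_coeff_0[symmetric] poly_prod)

lemma J0_ideal:
  fixes I :: "'a::comm_ring_1 set"
  assumes "is_ideal I"
  shows "is_ideal {p. coeff p 0 \<in> I}"
  using assms unfolding is_ideal_def by (auto simp: coeff_mult_0)

lemma gen_eq:
  fixes I :: "'a::comm_ring_1 set"
  assumes I: "is_ideal I"
  shows "ideal_gen ((\<lambda>c. [:c:]) ` I \<union> {[:0, 1:]}) = {p. coeff p 0 \<in> I}"
proof
  show "ideal_gen ((\<lambda>c. [:c:]) ` I \<union> {[:0, 1:]}) \<subseteq> {p. coeff p 0 \<in> I}"
  proof -
    have z: "0 \<in> I" using I unfolding is_ideal_def by blast
    have "(\<lambda>c. [:c:]) ` I \<union> {[:0, 1:]} \<subseteq> {p. coeff p 0 \<in> I}" using z by auto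
    then have "{p. coeff p 0 \<in> I} \<in> {J. is_ideal J \<and> (\<lambda>c. [:c:]) ` I \<union> {[:0, 1:]} \<subseteq> J}"
      using J0_ideal[OF I] by blast
    then show ?thesis unfolding ideal_gen_def by (rule Inter_lower)
  qed
next
  show "{p. coeff p 0 \<in> I} \<subseteq> ideal_gen ((\<lambda>c. [:c:]) ` I \<union> {[:0, 1:]})"
    unfolding ideal_gen_def
  proof (intro subsetI InterI)
    fix p J assume p: "p \<in> {p. coeff p 0 \<in> I}"
      and J: "J \<in> {J. is_ideal J \<and> (\<lambda>c. [:c:]) ` I \<union> {[:0, 1:]} \<subseteq> J}"
    obtain a q where pq: "p = pCons a q" by (cases p) auto
    have a: "a \<in> I" using p pq by simp
    have J1: "is_ideal J" "(\<lambda>c. [:c:]) ` I \<subseteq> J" "[:0, 1:] \<in> J" using J by auto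
    have "[:a:] \<in> J" using J1(2) a by blast
    moreover have "q * [:0,1:] \<in> J" using J1(1,3) unfolding is_ideal_def by blast
    moreover have "p = [:a:] + q * [:0,1:]" using pq by simp
    moreover have "\<forall>x\<in>J. \<forall>y\<in>J. x + y \<in> J" using J unfolding is_ideal_def by blast
    ultimately show "p \<in> J" by metis
  qed
qed

theorem mainTheorem3:
  fixes I :: "'a::idom set" and n :: nat
  assumes "n > 0" and "is_ideal I"
  shows "weakly_n_absorbing n (ideal_gen ((\<lambda>c. [:c:]) ` I \<union> {[:0, 1:]}))
         \<longleftrightarrow> weakly_n_absorbing n I"
proof -
  note I = assms(2)
  have one: "I = UNIV \<longleftrightarrow> 1 \<in> I"
  proof
    assume "1 \<in> I"
    then have "\<And>r. r * 1 \<in> I" using I unfolding is_ideal_def by blast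
    then show "I = UNIV" by auto
  qed auto
  have oneJ: "{p. coeff p 0 \<in> I} = UNIV \<longleftrightarrow> 1 \<in> I"
  proof
    assume "{p. coeff p 0 \<in> I} = UNIV"
    then have "(1::'a poly) \<in> {p. coeff p 0 \<in> I}" by simp
    then show "1 \<in> I" by simp
  next
    assume "1 \<in> I" then show "{p. coeff p 0 \<in> I} = UNIV" using one by auto
  qed
  show ?thesis unfolding gen_eq[OF I]
  proof
    assume A: "weakly_n_absorbing n {p. coeff p 0 \<in> I}"
    then have H: "\<forall>f :: nat \<Rightarrow> 'a poly. (\<Prod>i\<le>n. f i) \<noteq> 0 \<longrightarrow> (\<Prod>i\<le>n. f i) \<in> {p. coeff p 0 \<in> I} \<longrightarrow>
        (\<exists>j\<le>n. (\<Prod>i\<in>{..n} - {j}. f i) \<in> {p. coeff p 0 \<in> I})"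
      unfolding weakly_n_absorbing_def by blast
    have "{p. coeff p 0 \<in> I} \<noteq> UNIV" using A unfolding weakly_n_absorbing_def by blast
    then have nU: "I \<noteq> UNIV" by (simp add: one oneJ)
    show "weakly_n_absorbing n I" unfolding weakly_n_absorbing_def
    proof (intro conjI allI impI I nU)
      fix a :: "nat \<Rightarrow> 'a" assume a1: "(\<Prod>i\<le>n. a i) \<noteq> 0" and a2: "(\<Prod>i\<le>n. a i) \<in> I"
      have c: "\<And>A. coeff (\<Prod>i\<in>A. [:a i:]) 0 = (\<Prod>i\<in>A. a i)" by (simp add: coeff0_prod)
      have "(\<Prod>i\<le>n. [:a i:]) \<noteq> 0" using a1 c by (metis coeff_0)
      moreover have "(\<Prod>i\<le>n. [:a i:]) \<in> {p. coeff p 0 \<in> I}" using a2 by (simp only: mem_Collect_eq c)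
      ultimately obtain j where "j \<le> n" "(\<Prod>i\<in>{..n} - {j}. [:a i:]) \<in> {p. coeff p 0 \<in> I}"
        using H by blast
      then show "\<exists>j\<le>n. (\<Prod>i\<in>{..n} - {j}. a i) \<in> I" by (simp only: mem_Collect_eq c) blast
    qed
  next
    assume A: "weakly_n_absorbing n I"
    then have H: "\<forall>a :: nat \<Rightarrow> 'a. (\<Prod>i\<le>n. a i) \<noteq> 0 \<longrightarrow> (\<Prod>i\<le>n. a i) \<in> I \<longrightarrow>
        (\<exists>j\<le>n. (\<Prod>i\<in>{..n} - {j}. a i) \<in> I)"
      unfolding weakly_n_absorbing_def by blast
    have "I \<noteq> UNIV" using A unfolding weakly_n_absorbing_def by blast
    then have nU: "{p. coeff p 0 \<in> I} \<noteq> UNIV" by (simp add: one oneJ)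
    show "weakly_n_absorbing n {p. coeff p 0 \<in> I}" unfolding weakly_n_absorbing_def
    proof (intro conjI allI impI J0_ideal[OF I] nU)
      fix f :: "nat \<Rightarrow> 'a poly" assume f2: "(\<Prod>i\<le>n. f i) \<in> {p. coeff p 0 \<in> I}"
      have c: "\<And>A. coeff (\<Prod>i\<in>A. f i) 0 = (\<Prod>i\<in>A. coeff (f i) 0)" by (simp add: coeff0_prod)
      show "\<exists>j\<le>n. (\<Prod>i\<in>{..n} - {j}. f i) \<in> {p. coeff p 0 \<in> I}"
      proof (cases "(\<Prod>i\<le>n. coeff (f i) 0) = 0")
        case False
        moreover have "(\<Prod>i\<le>n. coeff (f i) 0) \<in> I" using f2 by (simp only: mem_Collect_eq c)
        ultimately obtain j where "j \<le> n" "(\<Prod>i\<in>{..n} - {j}. coeff (f i) 0) \<in> I"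
          using H by blast
        then show ?thesis by (simp only: mem_Collect_eq c) blast
      next
        case True
        then obtain j where j: "j \<le> n" "coeff (f j) 0 = 0" by auto
        define k where "k = (if j = 0 then 1 else (0::nat))"
        have k: "k \<le> n" "k \<noteq> j" using assms(1) by (auto simp: k_def)
        have z: "(\<Prod>i\<in>{..n} - {k}. coeff (f i) 0) = 0"
          using j k by (intro prod_zero) auto
        have "0 \<in> I" using I unfolding is_ideal_def by blast
        then have "(\<Prod>i\<in>{..n} - {k}. f i) \<in> {p. coeff p 0 \<in> I}"
          by (simp only: mem_Collect_eq c z)
        then show ?thesis using k by auto
      qed
    qed
  qed
qed

end
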